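(* For any connected graphs $G$ and $H$, $dim_s(G\square H)\ge dim_s(G)\,dim_s(H)$.
   Context: Graphs are finite, simple, undirected; for connected $G$, $d_G$ is the shortest-path distance and $I_G[u,v]$ is the set of vertices lying on some shortest $u$–$v$ path. A vertex $w$ strongly resolves vertices $u,v$ if $v\in I_G[u,w]$ or $u\in I_G[v,w]$. A strong resolving set of $G$ is a set $S\subseteq V(G)$ such that every pair of vertices is strongly resolved by some vertex of $S$; $dim_s(G)$ is the minimum cardinality of such a set. $G\square H$ denotes the Cartesian product: vertex set $V(G)\times V(H)$, $(a,b)\sim(c,d)$ iff ($a=c$ and $bd\in E(H)$) or ($b=d$ and $ac\in E(G)$). *)

theory Defs
  imports Main
begin

definition simple_graph :: "'a set \<Rightarrow> ('a \<Rightarrow> 'a \<Rightarrow> bool) \<Rightarrow> bool" where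
  "simple_graph V E \<longleftrightarrow> finite V \<and> (\<forall>x y. E x y \<longrightarrow> x \<in> V \<and> y \<in> V)
     \<and> (\<forall>x y. E x y \<longrightarrow> E y x) \<and> (\<forall>x. \<not> E x x)"

text \<open>A walk from u to v: a nonempty vertex list with consecutive vertices adjacent;
  its length is the number of edges, i.e. length xs - 1.\<close>
definition walk :: "'a set \<Rightarrow> ('a \<Rightarrow> 'a \<Rightarrow> bool) \<Rightarrow> 'a \<Rightarrow> 'a \<Rightarrow> 'a list \<Rightarrow> bool" where
  "walk V E u v xs \<longleftrightarrow> xs \<noteq> [] \<and> set xs \<subseteq> V \<and> hd xs = u \<and> last xs = v
     \<and> (\<forall>i. Suc i < length xs \<longrightarrow> E (xs ! i) (xs ! Suc i))"

definition connected_graph :: "'a set \<Rightarrow> ('a \<Rightarrow> 'a \<Rightarrow> bool) \<Rightarrow> bool" where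
  "connected_graph V E \<longleftrightarrow> V \<noteq> {} \<and> (\<forall>u\<in>V. \<forall>v\<in>V. \<exists>xs. walk V E u v xs)"

definition gdist :: "'a set \<Rightarrow> ('a \<Rightarrow> 'a \<Rightarrow> bool) \<Rightarrow> 'a \<Rightarrow> 'a \<Rightarrow> nat" where
  "gdist V E u v = (LEAST n. \<exists>xs. walk V E u v xs \<and> length xs = Suc n)"

definition interval :: "'a set \<Rightarrow> ('a \<Rightarrow> 'a \<Rightarrow> bool) \<Rightarrow> 'a \<Rightarrow> 'a \<Rightarrow> 'a set" where
  "interval V E u v = {w. \<exists>xs. walk V E u v xs \<and> length xs = Suc (gdist V E u v) \<and> w \<in> set xs}"

definition strongly_resolves :: "'a set \<Rightarrow> ('a \<Rightarrow> 'a \<Rightarrow> bool) \<Rightarrow> 'a \<Rightarrow> 'a \<Rightarrow> 'a \<Rightarrow> bool" where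
  "strongly_resolves V E w u v \<longleftrightarrow> v \<in> interval V E u w \<or> u \<in> interval V E v w"

definition strong_resolving_set :: "'a set \<Rightarrow> ('a \<Rightarrow> 'a \<Rightarrow> bool) \<Rightarrow> 'a set \<Rightarrow> bool" where
  "strong_resolving_set V E S \<longleftrightarrow> S \<subseteq> V \<and>
     (\<forall>u\<in>V. \<forall>v\<in>V. u \<noteq> v \<longrightarrow> (\<exists>w\<in>S. strongly_resolves V E w u v))"

definition strong_metric_dim :: "'a set \<Rightarrow> ('a \<Rightarrow> 'a \<Rightarrow> bool) \<Rightarrow> nat" where
  "strong_metric_dim V E = (LEAST k. \<exists>S. strong_resolving_set V E S \<and> card S = k)"

definition cart_edges :: "('a \<Rightarrow> 'a \<Rightarrow> bool) \<Rightarrow> ('b \<Rightarrow> 'b \<Rightarrow> bool) \<Rightarrow> ('a \<times> 'b) \<Rightarrow> ('a \<times> 'b) \<Rightarrow> bool" where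
  "cart_edges E1 E2 p q \<longleftrightarrow>
     (fst p = fst q \<and> E2 (snd p) (snd q)) \<or> (snd p = snd q \<and> E1 (fst p) (fst q))"

end

theory Submission
  imports Defs
begin


lemma walk_single: "u \<in> V \<Longrightarrow> walk V E u u [u]"
  by (simp add: walk_def)

lemma walk_nonempty: "walk V E u v xs \<Longrightarrow> xs \<noteq> []"
  by (simp add: walk_def)

lemma walk_endpoints_in: "walk V E u v xs \<Longrightarrow> u \<in> V \<and> v \<in> V"
  unfolding walk_def by (metis hd_in_set last_in_set subsetD)

lemma walk_cons:
  assumes "u \<in> V" "E u x" "walk V E x v xs"
  shows "walk V E u v (u # xs)"
proof -
  have ne: "xs \<noteq> []" and hx: "hd xs = x" using assms(3) by (auto simp: walk_def)
  have "xs ! 0 = x" using ne hx by (simp add: hd_conv_nth)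
  moreover have "\<forall>i. Suc i < length xs \<longrightarrow> E (xs ! i) (xs ! Suc i)" using assms(3) by (simp add: walk_def)
  ultimately have "\<forall>i. Suc i < length (u#xs) \<longrightarrow> E ((u#xs) ! i) ((u#xs) ! Suc i)"
    using assms(2) by (auto simp: nth_Cons split: nat.splits)
  then show ?thesis using assms(1,3) ne unfolding walk_def by auto
qed

lemma walk_tl:
  assumes "walk V E u v (x # y # ys)"
  shows "walk V E y v (y # ys) \<and> E u y \<and> x = u"
proof -
  have a: "\<forall>i. Suc i < length (x#y#ys) \<longrightarrow> E ((x#y#ys) ! i) ((x#y#ys) ! Suc i)"
    using assms unfolding walk_def by blast
  have "\<forall>i. Suc i < length (y#ys) \<longrightarrow> E ((y#ys) ! i) ((y#ys) ! Suc i)"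
  proof (intro allI impI)
    fix i assume "Suc i < length (y#ys)"
    then show "E ((y#ys) ! i) ((y#ys) ! Suc i)" using a[rule_format, of "Suc i"] by simp
  qed
  moreover have "E x y" using a[rule_format, of 0] by simp
  moreover have hx: "x = u" using assms by (simp add: walk_def)
  moreover have "set (y#ys) \<subseteq> V" "last (y#ys) = v" using assms by (auto simp: walk_def)
  ultimately show ?thesis unfolding walk_def by auto
qed

lemma walk_append:
  assumes "walk V E u v xs" "walk V E v w ys"
  shows "walk V E u w (xs @ tl ys) \<and> length (xs @ tl ys) = length xs + length ys - 1"
  using assms
proof (induction xs arbitrary: u)
  case Nil then show ?case by (simp add: walk_def)
next
  case (Cons x xs)
  have hx: "x = u" using Cons.prems unfolding walk_def by auto
  have ysne: "ys \<noteq> []" using Cons.prems(2) by (simp add: walk_def)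
  show ?case
  proof (cases xs)
    case Nil
    then have "u = v" using Cons.prems hx unfolding walk_def by auto
    moreover have "ys = v # tl ys" using Cons.prems(2) unfolding walk_def
      by (metis hd_Cons_tl)
    ultimately have "x # xs @ tl ys = ys" using Nil hx by simp
    then show ?thesis using Nil Cons.prems(2) \<open>u = v\<close> by simp
  next
    case (Cons y zs)
    from walk_tl[of V E u v x y zs] Cons.prems(1) Cons
    have w1: "walk V E y v xs" and e: "E u y" by auto
    from Cons.IH[OF w1 Cons.prems(2)] have IH: "walk V E y w (xs @ tl ys)"
      "length (xs @ tl ys) = length xs + length ys - 1" by auto
    have "walk V E u w (u # (xs @ tl ys))"
      using walk_cons[OF _ e IH(1)] walk_endpoints_in[OF Cons.prems(1)] by blast
    then show ?thesis using hx IH(2) ysne by (simp add: Cons)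
  qed
qed

lemma walk_take:
  assumes "walk V E u w xs" "i < length xs"
  shows "walk V E u (xs ! i) (take (Suc i) xs)"
proof -
  have ne: "take (Suc i) xs \<noteq> []" using assms(2) by (cases xs) auto
  have "set (take (Suc i) xs) \<subseteq> V" using assms(1) set_take_subset unfolding walk_def by fast
  moreover have "hd (take (Suc i) xs) = u" using assms unfolding walk_def by (simp add: hd_take)
  moreover have "last (take (Suc i) xs) = xs ! i"
  proof -
    have l: "length (take (Suc i) xs) = Suc i" using assms(2) by simp
    have "last (take (Suc i) xs) = take (Suc i) xs ! i" using ne l by (simp add: last_conv_nth)
    then show ?thesis by simp
  qed
  moreover have "\<forall>j. Suc j < length (take (Suc i) xs) \<longrightarrow>
      E (take (Suc i) xs ! j) (take (Suc i) xs ! Suc j)" using assms(1) unfolding walk_def by auto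
  ultimately show ?thesis using ne unfolding walk_def by blast
qed

lemma walk_drop:
  assumes "walk V E u w xs" "i < length xs"
  shows "walk V E (xs ! i) w (drop i xs)"
proof -
  have ne: "drop i xs \<noteq> []" using assms(2) by simp
  have "set (drop i xs) \<subseteq> V" using assms(1) set_drop_subset unfolding walk_def by fast
  moreover have "hd (drop i xs) = xs ! i" using assms(2) by (simp add: hd_drop_conv_nth)
  moreover have "last (drop i xs) = w" using assms ne unfolding walk_def by simp
  moreover have "\<forall>j. Suc j < length (drop i xs) \<longrightarrow>
      E (drop i xs ! j) (drop i xs ! Suc j)"
  proof (intro allI impI)
    fix j assume "Suc j < length (drop i xs)"
    then have "Suc (i + j) < length xs" by simp
    then have "E (xs ! (i+j)) (xs ! Suc (i+j))" using assms(1) unfolding walk_def by blast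
    then show "E (drop i xs ! j) (drop i xs ! Suc j)" using assms(2) by simp
  qed
  ultimately show ?thesis using ne unfolding walk_def by blast
qed

lemma walk_rev:
  assumes "walk V E u v xs" "\<And>x y. E x y \<Longrightarrow> E y x"
  shows "walk V E v u (rev xs)"
proof -
  have ne: "xs \<noteq> []" using assms(1) by (simp add: walk_def)
  have "\<forall>j. Suc j < length (rev xs) \<longrightarrow> E (rev xs ! j) (rev xs ! Suc j)"
  proof (intro allI impI)
    fix j assume j: "Suc j < length (rev xs)"
    let ?k = "length xs - Suc (Suc j)"
    have k: "Suc ?k < length xs" using j by simp
    have "E (xs ! ?k) (xs ! Suc ?k)" using assms(1) k unfolding walk_def by blast
    moreover have "rev xs ! j = xs ! Suc ?k" using j by (simp add: rev_nth Suc_diff_Suc)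
    moreover have "rev xs ! Suc j = xs ! ?k" using j by (simp add: rev_nth)
    ultimately show "E (rev xs ! j) (rev xs ! Suc j)" using assms(2) by simp
  qed
  then show ?thesis using assms(1) ne unfolding walk_def by (simp add: hd_rev last_rev)
qed




lemma gdist_le:
  assumes "walk V E u v xs"
  shows "gdist V E u v \<le> length xs - 1"
proof -
  have "xs \<noteq> []" using assms by (simp add: walk_def)
  then have "length xs = Suc (length xs - 1)" by simp
  then have "\<exists>ys. walk V E u v ys \<and> length ys = Suc (length xs - 1)" using assms by blast
  then show ?thesis unfolding gdist_def by (rule Least_le)
qed

lemma gdist_walk:
  assumes "walk V E u v xs"
  shows "\<exists>ys. walk V E u v ys \<and> length ys = Suc (gdist V E u v)"
proof -
  have "xs \<noteq> []" using assms by (simp add: walk_def)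
  then have "length xs = Suc (length xs - 1)" by simp
  then have "\<exists>n ys. walk V E u v ys \<and> length ys = Suc n" using assms by blast
  then show ?thesis unfolding gdist_def by (rule LeastI_ex)
qed

locale cgraph =
  fixes V :: "'a set" and E :: "'a \<Rightarrow> 'a \<Rightarrow> bool"
  assumes finV: "finite V" and E_sym: "E x y \<Longrightarrow> E y x"
    and E_in: "x \<in> V \<Longrightarrow> E x y \<Longrightarrow> y \<in> V" and cg: "connected_graph V E"
begin

abbreviation d where "d \<equiv> gdist V E"

lemma conn: "u \<in> V \<Longrightarrow> v \<in> V \<Longrightarrow> \<exists>xs. walk V E u v xs"
  using cg by (simp add: connected_graph_def)

lemma short_walk:
  assumes "u \<in> V" "v \<in> V"
  obtains xs where "walk V E u v xs" "length xs = Suc (d u v)"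
proof -
  obtain xs0 where "walk V E u v xs0" using conn[OF assms] by blast
  from gdist_walk[OF this] obtain xs where "walk V E u v xs" "length xs = Suc (d u v)" by blast
  then show ?thesis using that by blast
qed

lemma triangle:
  assumes "u \<in> V" "v \<in> V" "w \<in> V"
  shows "d u w \<le> d u v + d v w"
proof -
  obtain xs where xs: "walk V E u v xs" "length xs = Suc (d u v)" using short_walk assms by blast
  obtain ys where ys: "walk V E v w ys" "length ys = Suc (d v w)" using short_walk assms by blast
  from walk_append[OF xs(1) ys(1)] have "walk V E u w (xs @ tl ys)"
    "length (xs @ tl ys) = length xs + length ys - 1" by auto
  with gdist_le[of V E u w "xs @ tl ys"] xs(2) ys(2) show ?thesis by simp
qed

lemma dsym: assumes "u \<in> V" "v \<in> V" shows "d u v = d v u"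
proof -
  have "d v u \<le> d u v" if uv: "u \<in> V" "v \<in> V" for u v
  proof -
    obtain xs where xs: "walk V E u v xs" "length xs = Suc (d u v)" using short_walk[OF uv] by blast
    have "walk V E v u (rev xs)" using walk_rev[OF xs(1)] E_sym by blast
    then show ?thesis using gdist_le[of V E v u "rev xs"] xs(2) by simp
  qed
  then show ?thesis using assms by (simp add: le_antisym)
qed

lemma drefl: assumes "u \<in> V" shows "d u u = 0"
  using gdist_le[OF walk_single[OF assms, of E]] by simp

lemma d0: assumes "u \<in> V" "v \<in> V" "d u v = 0" shows "u = v"
proof -
  obtain xs where xs: "walk V E u v xs" "length xs = Suc 0" using short_walk assms by metis
  then obtain x where "xs = [x]" by (cases xs) auto
  then show ?thesis using xs(1) by (auto simp: walk_def)
qed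

lemma dedge: assumes "u \<in> V" "E u z" shows "d u z \<le> 1"
proof -
  have uz: "u \<in> V" "z \<in> V" using E_in[OF assms] assms by auto
  have "walk V E u z [u, z]" using walk_cons[of u V E z z "[z]", OF uz(1) assms(2) walk_single[OF uz(2)]] .
  then show ?thesis using gdist_le[of V E u z "[u,z]"] by simp
qed

lemma dedge2: assumes "u \<in> V" "E u z" "w \<in> V" shows "d z w \<le> d u w + 1" "d u w \<le> d z w + 1"
proof -
  have uz: "u \<in> V" "z \<in> V" using E_in assms by auto
  have "d z u \<le> 1" using dedge[OF uz(2) E_sym[OF assms(2)]] .
  then show "d z w \<le> d u w + 1" using triangle[OF uz(2) uz(1) assms(3)] by simp
  have "d u z \<le> 1" using dedge[OF assms(1,2)] .
  then show "d u w \<le> d z w + 1" using triangle[OF uz(1) uz(2) assms(3)] by simp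
qed

lemma next_step:
  assumes "u \<in> V" "w \<in> V" "u \<noteq> w"
  obtains z where "E u z" "d z w + 1 \<le> d u w"
proof -
  obtain xs where xs: "walk V E u w xs" "length xs = Suc (d u w)" using short_walk assms by blast
  have "length xs \<noteq> 1"
  proof
    assume "length xs = 1"
    then obtain x where "xs = [x]" by (cases xs) auto
    then show False using xs(1) assms(3) by (auto simp: walk_def)
  qed
  moreover have "xs \<noteq> []" using xs(1) by (simp add: walk_def)
  ultimately obtain x y ys where xyz: "xs = x # y # ys"
    by (cases xs; cases "tl xs") auto
  from walk_tl[of V E u w x y ys] xs(1) xyz have w: "walk V E y w (y # ys)" "E u y" by auto
  have "d y w \<le> length (y#ys) - 1" using gdist_le[OF w(1)] .
  then have "d y w + 1 \<le> d u w" using xs(2) xyz by simp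
  then show ?thesis using that w(2) by blast
qed

lemma interval_le:
  assumes "z \<in> interval V E x y"
  shows "d x z + d z y \<le> d x y"
proof -
  obtain xs where xs: "walk V E x y xs" "length xs = Suc (d x y)" "z \<in> set xs"
    using assms unfolding interval_def by blast
  obtain i where i: "i < length xs" "xs ! i = z" using xs(3) by (metis in_set_conv_nth)
  have "d x z \<le> length (take (Suc i) xs) - 1" using gdist_le[OF walk_take[OF xs(1) i(1)]] i(2) by simp
  moreover have "d z y \<le> length (drop i xs) - 1" using gdist_le[OF walk_drop[OF xs(1) i(1)]] i(2) by simp
  ultimately show ?thesis using i(1) xs(2) by simp
qed

lemma interval_of_eq:
  assumes "x \<in> V" "y \<in> V" "z \<in> V" "d x z + d z y = d x y"
  shows "z \<in> interval V E x y"
proof -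
  obtain xs where xs: "walk V E x z xs" "length xs = Suc (d x z)" using short_walk assms by blast
  obtain ys where ys: "walk V E z y ys" "length ys = Suc (d z y)" using short_walk assms by blast
  from walk_append[OF xs(1) ys(1)] have w: "walk V E x y (xs @ tl ys)"
    "length (xs @ tl ys) = length xs + length ys - 1" by auto
  have "last xs = z" "xs \<noteq> []" using xs(1) by (auto simp: walk_def)
  then have "z \<in> set (xs @ tl ys)" by auto
  moreover have "length (xs @ tl ys) = Suc (d x y)" using w(2) xs(2) ys(2) assms(4) by simp
  ultimately show ?thesis unfolding interval_def using w(1) by blast
qed

end



definition mmd :: "'a set \<Rightarrow> ('a \<Rightarrow> 'a \<Rightarrow> bool) \<Rightarrow> 'a \<Rightarrow> 'a \<Rightarrow> bool" where
  "mmd V E u v \<longleftrightarrow> u \<in> V \<and> v \<in> V \<and> u \<noteq> v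
     \<and> (\<forall>z. E u z \<longrightarrow> gdist V E z v \<le> gdist V E u v)
     \<and> (\<forall>z. E v z \<longrightarrow> gdist V E u z \<le> gdist V E u v)"

lemma finite_argmax:
  fixes f :: "'a \<Rightarrow> nat"
  assumes "finite A" "a \<in> A"
  shows "\<exists>x\<in>A. \<forall>y\<in>A. f y \<le> f x"
proof -
  have fin: "finite (f ` A)" "f ` A \<noteq> {}" using assms by auto
  then have "Max (f ` A) \<in> f ` A" by (rule Max_in)
  then obtain x where x: "x \<in> A" "f x = Max (f ` A)" by auto
  have "\<forall>y\<in>A. f y \<le> f x" using x(2) Max_ge[OF fin(1)] by auto
  then show ?thesis using x(1) by blast
qed

context cgraph
begin

lemma mmd_sym: assumes "mmd V E u v" shows "mmd V E v u"
proof -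
  have uv: "u \<in> V" "v \<in> V" "u \<noteq> v" using assms by (auto simp: mmd_def)
  have c1: "\<forall>z. E u z \<longrightarrow> d z v \<le> d u v" and c2: "\<forall>z. E v z \<longrightarrow> d u z \<le> d u v"
    using assms by (auto simp: mmd_def)
  have "\<forall>z. E v z \<longrightarrow> d z u \<le> d v u"
  proof (intro allI impI)
    fix z assume "E v z"
    then have "z \<in> V" using E_in uv by auto
    then show "d z u \<le> d v u" using c2 \<open>E v z\<close> dsym uv by auto
  qed
  moreover have "\<forall>z. E u z \<longrightarrow> d v z \<le> d v u"
  proof (intro allI impI)
    fix z assume "E u z"
    then have "z \<in> V" using E_in uv by auto
    then show "d v z \<le> d v u" using c1 \<open>E u z\<close> dsym uv by auto
  qed
  ultimately show ?thesis using uv unfolding mmd_def by auto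
qed

lemma resolving_hits:
  assumes S: "strong_resolving_set V E S" and m: "mmd V E u v"
  shows "u \<in> S \<or> v \<in> S"
proof -
  have uv: "u \<in> V" "v \<in> V" "u \<noteq> v" using m by (auto simp: mmd_def)
  have c1: "\<forall>z. E u z \<longrightarrow> d z v \<le> d u v" and c2: "\<forall>z. E v z \<longrightarrow> d u z \<le> d u v"
    using m by (auto simp: mmd_def)
  obtain w where w: "w \<in> S" "strongly_resolves V E w u v"
    using S uv unfolding strong_resolving_set_def by blast
  have wV: "w \<in> V" using S w(1) unfolding strong_resolving_set_def by blast
  show ?thesis
  proof (cases "v \<in> interval V E u w")
    case True
    then have h: "d u v + d v w \<le> d u w" by (rule interval_le)
    show ?thesis
    proof (cases "v = w")
      case True then show ?thesis using w(1) by simp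
    next
      case False
      then obtain z where z: "E v z" "d z w + 1 \<le> d v w" using next_step uv(2) wV by blast
      have zV: "z \<in> V" using E_in z(1) uv by auto
      have "d u w \<le> d u z + d z w" using triangle uv(1) zV wV by blast
      then have "d u z \<ge> d u v + 1" using h z(2) by linarith
      then show ?thesis using c2 z(1) by fastforce
    qed
  next
    case False
    then have "u \<in> interval V E v w" using w(2) unfolding strongly_resolves_def by blast
    then have h: "d v u + d u w \<le> d v w" by (rule interval_le)
    show ?thesis
    proof (cases "u = w")
      case True then show ?thesis using w(1) by simp
    next
      case False
      then obtain z where z: "E u z" "d z w + 1 \<le> d u w" using next_step uv(1) wV by blast
      have zV: "z \<in> V" using E_in z(1) uv by auto
      have "d v w \<le> d v z + d z w" using triangle uv(2) zV wV by blast
      then have "d v z \<ge> d v u + 1" using h z(2) by linarith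
      moreover have "d v z = d z v" "d v u = d u v" using dsym zV uv by auto
      ultimately show ?thesis using c1 z(1) by fastforce
    qed
  qed
qed

lemma hits_resolving:
  assumes TV: "T \<subseteq> V" and hit: "\<And>u v. mmd V E u v \<Longrightarrow> u \<in> T \<or> v \<in> T"
  shows "strong_resolving_set V E T"
  unfolding strong_resolving_set_def
proof (intro conjI TV ballI impI)
  fix u v assume uV: "u \<in> V" and vV: "v \<in> V" and uv: "u \<noteq> v"
  define C1 where "C1 = {z \<in> V. d u z = d u v + d v z}"
  have "v \<in> C1" using vV drefl unfolding C1_def by simp
  moreover have "finite C1" using finV unfolding C1_def by simp
  ultimately obtain v' where v'C: "v' \<in> C1" and v'max: "\<forall>y\<in>C1. d u y \<le> d u v'"
    using finite_argmax[of C1 v "\<lambda>y. d u y"] by blast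
  have v'V: "v' \<in> V" and v'eq: "d u v' = d u v + d v v'" using v'C unfolding C1_def by auto
  have v'far: "\<forall>z. E v' z \<longrightarrow> d u z \<le> d u v'"
  proof (intro allI impI)
    fix z assume ez: "E v' z"
    have zV: "z \<in> V" using E_in ez v'V by auto
    show "d u z \<le> d u v'"
    proof (rule ccontr)
      assume "\<not> d u z \<le> d u v'"
      then have gt: "d u z \<ge> d u v' + 1" by simp
      have "d v z \<le> d v v' + 1" using dedge2(1)[OF v'V ez vV] dsym v'V vV zV by simp
      moreover have "d u z \<le> d u v + d v z" using triangle uV vV zV by blast
      moreover have "d u z \<le> d u v' + 1" using dedge2(1)[OF v'V ez uV] dsym v'V uV zV by simp
      ultimately have "d u z = d u v + d v z" using gt v'eq by linarith
      then have "z \<in> C1" using zV unfolding C1_def by simp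
      then show False using v'max gt by fastforce
    qed
  qed
  define C2 where "C2 = {z \<in> V. d v' z = d v' u + d u z}"
  have "u \<in> C2" using uV drefl unfolding C2_def by simp
  moreover have "finite C2" using finV unfolding C2_def by simp
  ultimately obtain u' where u'C: "u' \<in> C2" and u'max: "\<forall>y\<in>C2. d v' y \<le> d v' u'"
    using finite_argmax[of C2 u "\<lambda>y. d v' y"] by blast
  have u'V: "u' \<in> V" and u'eq: "d v' u' = d v' u + d u u'" using u'C unfolding C2_def by auto
  have u'far: "\<forall>z. E u' z \<longrightarrow> d z v' \<le> d u' v'"
  proof (intro allI impI)
    fix z assume ez: "E u' z"
    have zV: "z \<in> V" using E_in ez u'V by auto
    show "d z v' \<le> d u' v'"
    proof (rule ccontr)
      assume "\<not> d z v' \<le> d u' v'"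
      then have gt: "d v' z \<ge> d v' u' + 1" using dsym zV v'V u'V by simp
      have "d u z \<le> d u u' + 1" using dedge2(1)[OF u'V ez uV] dsym u'V uV zV by simp
      moreover have "d v' z \<le> d v' u + d u z" using triangle v'V uV zV by blast
      moreover have "d v' z \<le> d v' u' + 1" using dedge2(1)[OF u'V ez v'V] dsym v'V u'V zV by simp
      ultimately have "d v' z = d v' u + d u z" using gt u'eq by linarith
      then have "z \<in> C2" using zV unfolding C2_def by simp
      then show False using u'max gt by fastforce
    qed
  qed
  have duv: "d u v > 0" using d0 uV vV uv by fastforce
  have v'far2: "\<forall>z. E v' z \<longrightarrow> d u' z \<le> d u' v'"
  proof (intro allI impI)
    fix z assume ez: "E v' z"
    have zV: "z \<in> V" using E_in ez v'V by auto
    show "d u' z \<le> d u' v'"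
    proof (rule ccontr)
      assume "\<not> d u' z \<le> d u' v'"
      then have gt: "d u' z \<ge> d u' v' + 1" by simp
      have "d u' z \<le> d u' u + d u z" using triangle u'V uV zV by blast
      moreover have "d u' v' = d u' u + d u v'" using u'eq dsym u'V uV v'V by simp
      moreover have "d u z \<le> d u v'" using v'far ez by blast
      ultimately show False using gt by linarith
    qed
  qed
  have "u' \<noteq> v'"
  proof
    assume "u' = v'"
    then have "d v' u' = 0" using drefl v'V by simp
    then show False using u'eq v'eq duv dsym uV v'V by simp
  qed
  then have "mmd V E u' v'" unfolding mmd_def using u'V v'V u'far v'far2 by blast
  then have "u' \<in> T \<or> v' \<in> T" by (rule hit)
  then show "\<exists>w\<in>T. strongly_resolves V E w u v"
  proof
    assume "v' \<in> T"
    moreover have "v \<in> interval V E u v'" using interval_of_eq uV v'V vV v'eq by simp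
    ultimately show ?thesis unfolding strongly_resolves_def by blast
  next
    assume "u' \<in> T"
    moreover have "d v u + d u u' = d v u'"
    proof -
      have "d v u' \<le> d v u + d u u'" using triangle vV uV u'V by blast
      moreover have "d v' u' \<le> d v' v + d v u'" using triangle v'V vV u'V by blast
      moreover have "d v' u = d u v + d v v'" using v'eq dsym uV v'V by simp
      moreover have "d v' v = d v v'" using dsym vV v'V by simp
      moreover have "d v u = d u v" using dsym vV uV by simp
      ultimately show ?thesis using u'eq by linarith
    qed
    then have "u \<in> interval V E v u'" using interval_of_eq vV u'V uV by simp
    ultimately show ?thesis unfolding strongly_resolves_def by blast
  qed
qed

end



lemma walk_map1:
  assumes "walk V1 E1 g g' xs" "h \<in> V2"
  shows "walk (V1 \<times> V2) (cart_edges E1 E2) (g,h) (g',h) (map (\<lambda>x. (x,h)) xs)"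
  using assms unfolding walk_def cart_edges_def by (auto simp: hd_map last_map)

lemma walk_map2:
  assumes "walk V2 E2 h h' ys" "g \<in> V1"
  shows "walk (V1 \<times> V2) (cart_edges E1 E2) (g,h) (g,h') (map (\<lambda>y. (g,y)) ys)"
  using assms unfolding walk_def cart_edges_def by (auto simp: hd_map last_map)

locale two = G: cgraph V1 E1 + H: cgraph V2 E2
  for V1 :: "'a set" and E1 and V2 :: "'b set" and E2
begin

abbreviation P where "P \<equiv> cart_edges E1 E2"
abbreviation dP where "dP \<equiv> gdist (V1 \<times> V2) P"

lemma prod_walk:
  assumes "g \<in> V1" "g' \<in> V1" "h \<in> V2" "h' \<in> V2"
  obtains zs where "walk (V1 \<times> V2) P (g,h) (g',h') zs"
    "length zs = Suc (G.d g g' + H.d h h')"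
proof -
  obtain xs where xs: "walk V1 E1 g g' xs" "length xs = Suc (G.d g g')" using G.short_walk assms by blast
  obtain ys where ys: "walk V2 E2 h h' ys" "length ys = Suc (H.d h h')" using H.short_walk assms by blast
  have w1: "walk (V1 \<times> V2) P (g,h) (g',h) (map (\<lambda>x. (x,h)) xs)" using walk_map1[OF xs(1) assms(3)] .
  have w2: "walk (V1 \<times> V2) P (g',h) (g',h') (map (\<lambda>y. (g',y)) ys)" using walk_map2[OF ys(1) assms(2)] .
  from walk_append[OF w1 w2] xs(2) ys(2) show ?thesis using that by auto
qed


lemma prod_cg: "connected_graph (V1 \<times> V2) P"
proof -
  have "V1 \<noteq> {}" "V2 \<noteq> {}" using G.cg H.cg by (auto simp: connected_graph_def)
  moreover have "\<forall>u\<in>V1 \<times> V2. \<forall>v\<in>V1 \<times> V2. \<exists>xs. walk (V1 \<times> V2) P u v xs"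
  proof (intro ballI)
    fix u v assume "u \<in> V1 \<times> V2" "v \<in> V1 \<times> V2"
    then show "\<exists>xs. walk (V1 \<times> V2) P u v xs" using prod_walk
      by (metis mem_Times_iff prod.collapse)
  qed
  ultimately show ?thesis unfolding connected_graph_def by auto
qed

sublocale PG: cgraph "V1 \<times> V2" P
proof
  show "finite (V1 \<times> V2)" using G.finV H.finV by simp
  show "P x y \<Longrightarrow> P y x" for x y using G.E_sym H.E_sym unfolding cart_edges_def by auto
  show "x \<in> V1 \<times> V2 \<Longrightarrow> P x y \<Longrightarrow> y \<in> V1 \<times> V2" for x y
    using G.E_in H.E_in unfolding cart_edges_def by (cases x; cases y) auto
  show "connected_graph (V1 \<times> V2) P" by (rule prod_cg)
qed

lemma walk_lower:
  assumes "walk (V1 \<times> V2) P p q zs"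
  shows "G.d (fst p) (fst q) + H.d (snd p) (snd q) \<le> length zs - 1"
  using assms
proof (induction zs arbitrary: p)
  case Nil then show ?case by (simp add: walk_def)
next
  case (Cons z rest)
  have pV: "p \<in> V1 \<times> V2" and qV: "q \<in> V1 \<times> V2" using walk_endpoints_in[OF Cons.prems] by auto
  show ?case
  proof (cases rest)
    case Nil
    then have "p = q" using Cons.prems by (auto simp: walk_def)
    then show ?thesis using G.drefl H.drefl qV by auto
  next
    case (Cons y ys)
    from walk_tl[of "V1 \<times> V2" P p q z y ys] Cons.prems Cons
    have w: "walk (V1 \<times> V2) P y q rest" and e: "P p y" by auto
    have IH: "G.d (fst y) (fst q) + H.d (snd y) (snd q) \<le> length rest - 1" using Cons.IH[OF w] .
    have yV: "y \<in> V1 \<times> V2" using walk_endpoints_in[OF w] by auto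
    have "G.d (fst p) (fst q) + H.d (snd p) (snd q) \<le> G.d (fst y) (fst q) + H.d (snd y) (snd q) + 1"
    proof (cases "fst p = fst y \<and> E2 (snd p) (snd y)")
      case True
      then have "H.d (snd p) (snd q) \<le> H.d (snd y) (snd q) + 1" using H.dedge2(2)[of "snd p" "snd y" "snd q"] qV pV by auto
      then show ?thesis using True by simp
    next
      case False
      then have "snd p = snd y \<and> E1 (fst p) (fst y)" using e unfolding cart_edges_def by auto
      then have "G.d (fst p) (fst q) \<le> G.d (fst y) (fst q) + 1" "snd p = snd y"
        using G.dedge2(2)[of "fst p" "fst y" "fst q"] qV pV by auto
      then show ?thesis by simp
    qed
    then show ?thesis using IH Cons by simp
  qed
qed

lemma dP_eq:
  assumes "g \<in> V1" "g' \<in> V1" "h \<in> V2" "h' \<in> V2"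
  shows "dP (g,h) (g',h') = G.d g g' + H.d h h'"
proof -
  obtain zs where "walk (V1 \<times> V2) P (g,h) (g',h') zs" "length zs = Suc (G.d g g' + H.d h h')"
    using prod_walk assms by blast
  then have le: "dP (g,h) (g',h') \<le> G.d g g' + H.d h h'" using gdist_le by fastforce
  obtain ws where "walk (V1 \<times> V2) P (g,h) (g',h') ws" "length ws = Suc (dP (g,h) (g',h'))"
    using PG.short_walk assms by blast
  then have "G.d g g' + H.d h h' \<le> dP (g,h) (g',h')" using walk_lower by fastforce
  then show ?thesis using le by simp
qed

lemma prod_mmd:
  assumes mg: "mmd V1 E1 g g'" and mh: "mmd V2 E2 h h'"
  shows "mmd (V1 \<times> V2) P (g,h) (g',h')"
proof -
  have gg: "g \<in> V1" "g' \<in> V1" "g \<noteq> g'" using mg by (auto simp: mmd_def)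
  have hh: "h \<in> V2" "h' \<in> V2" using mh by (auto simp: mmd_def)
  have g1: "\<forall>z. E1 g z \<longrightarrow> G.d z g' \<le> G.d g g'" and g2: "\<forall>z. E1 g' z \<longrightarrow> G.d g z \<le> G.d g g'"
    using mg by (auto simp: mmd_def)
  have h1: "\<forall>z. E2 h z \<longrightarrow> H.d z h' \<le> H.d h h'" and h2: "\<forall>z. E2 h' z \<longrightarrow> H.d h z \<le> H.d h h'"
    using mh by (auto simp: mmd_def)
  have c1: "\<forall>z. P (g,h) z \<longrightarrow> dP z (g',h') \<le> dP (g,h) (g',h')"
  proof (intro allI impI)
    fix z assume ez: "P (g,h) z"
    obtain a b where z: "z = (a,b)" by (cases z)
    have zV: "a \<in> V1" "b \<in> V2" using PG.E_in[OF _ ez] z gg hh by auto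
    have "(a = g \<and> E2 h b) \<or> (b = h \<and> E1 g a)" using ez z unfolding cart_edges_def by auto
    then show "dP z (g',h') \<le> dP (g,h) (g',h')"
      using dP_eq zV gg hh g1 h1 z by auto
  qed
  have c2: "\<forall>z. P (g',h') z \<longrightarrow> dP (g,h) z \<le> dP (g,h) (g',h')"
  proof (intro allI impI)
    fix z assume ez: "P (g',h') z"
    obtain a b where z: "z = (a,b)" by (cases z)
    have zV: "a \<in> V1" "b \<in> V2" using PG.E_in[OF _ ez] z gg hh by auto
    have "(a = g' \<and> E2 h' b) \<or> (b = h' \<and> E1 g' a)" using ez z unfolding cart_edges_def by auto
    then show "dP (g,h) z \<le> dP (g,h) (g',h')"
      using dP_eq zV gg hh g2 h2 z by auto
  qed
  show ?thesis unfolding mmd_def using c1 c2 gg hh by auto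
qed

end



definition cover_num :: "'a set \<Rightarrow> ('a \<Rightarrow> 'a \<Rightarrow> bool) \<Rightarrow> nat" where
  "cover_num V R = (LEAST k. \<exists>X. X \<subseteq> V \<and> (\<forall>u v. R u v \<longrightarrow> u \<in> X \<or> v \<in> X) \<and> card X = k)"

lemma cover_num_le:
  assumes "X \<subseteq> V" "\<forall>u v. R u v \<longrightarrow> u \<in> X \<or> v \<in> X"
  shows "cover_num V R \<le> card X"
  unfolding cover_num_def by (rule Least_le) (use assms in blast)

lemma cover_num_ex:
  assumes "\<forall>u v. R u v \<longrightarrow> u \<in> V"
  shows "\<exists>X. X \<subseteq> V \<and> (\<forall>u v. R u v \<longrightarrow> u \<in> X \<or> v \<in> X) \<and> card X = cover_num V R"
proof -
  have "\<exists>k X. X \<subseteq> V \<and> (\<forall>u v. R u v \<longrightarrow> u \<in> X \<or> v \<in> X) \<and> card X = k" using assms by blast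
  then show ?thesis unfolding cover_num_def by (rule LeastI_ex)
qed

lemma card_filter_sum:
  assumes "finite A"
  shows "card {x \<in> A. Q x} = (\<Sum>x\<in>A. if Q x then 1 else 0)"
proof -
  have "card {x \<in> A. Q x} = (\<Sum>x\<in>{x \<in> A. Q x}. 1)" by (rule card_eq_sum)
  also have "\<dots> = (\<Sum>x\<in>A. if Q x then 1 else 0)" by (rule sum.inter_filter[OF assms])
  finally show ?thesis .
qed

lemma comb:
  fixes R1 :: "'a \<Rightarrow> 'a \<Rightarrow> bool" and R2 :: "'b \<Rightarrow> 'b \<Rightarrow> bool"
  assumes fin1: "finite V1" and fin2: "finite V2"
    and R1in: "\<And>u v. R1 u v \<Longrightarrow> u \<in> V1 \<and> v \<in> V1"
    and R1sym: "\<And>u v. R1 u v \<Longrightarrow> R1 v u"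
    and R2in: "\<And>u v. R2 u v \<Longrightarrow> u \<in> V2 \<and> v \<in> V2"
    and CV: "C \<subseteq> V1 \<times> V2"
    and hyp: "\<And>a a' b b'. R1 a a' \<Longrightarrow> R2 b b' \<Longrightarrow> (a,b) \<in> C \<or> (a',b') \<in> C"
  shows "cover_num V1 R1 * cover_num V2 R2 \<le> card C"
proof -
  define b1 where "b1 = cover_num V1 R1"
  define b2 where "b2 = cover_num V2 R2"
  obtain D where D: "D \<subseteq> V1" "\<forall>u v. R1 u v \<longrightarrow> u \<in> D \<or> v \<in> D" "card D = b1"
    using cover_num_ex[of R1 V1] R1in unfolding b1_def by blast
  have finD: "finite D" using D(1) fin1 finite_subset by blast
  define Pd where "Pd d = {b \<in> V2. (d,b) \<notin> C \<and> (\<exists>y. R1 d y \<and> (y,b) \<notin> C)}" for d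
  define Cb where "Cb b = {a \<in> V1. (a,b) \<in> C}" for b
  define Db where "Db b = {d \<in> D. b \<in> Pd d}" for b
  have F1: "b1 \<le> card (Cb b) + card (Db b)" if bV: "b \<in> V2" for b
  proof -
    have sub: "Cb b \<union> Db b \<subseteq> V1" using D(1) unfolding Cb_def Db_def by auto
    have cov: "\<forall>u v. R1 u v \<longrightarrow> u \<in> Cb b \<union> Db b \<or> v \<in> Cb b \<union> Db b"
    proof (intro allI impI)
      fix u v assume r: "R1 u v"
      have uv: "u \<in> V1" "v \<in> V1" using R1in[OF r] by auto
      show "u \<in> Cb b \<union> Db b \<or> v \<in> Cb b \<union> Db b"
      proof (cases "(u,b) \<in> C \<or> (v,b) \<in> C")
        case True then show ?thesis using uv unfolding Cb_def by auto
      next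
        case False
        have "u \<in> D \<or> v \<in> D" using D(2) r by blast
        then show ?thesis
        proof
          assume "u \<in> D"
          moreover have "b \<in> Pd u" using False r bV unfolding Pd_def by auto
          ultimately show ?thesis unfolding Db_def by auto
        next
          assume "v \<in> D"
          moreover have "b \<in> Pd v" using False R1sym[OF r] bV unfolding Pd_def by auto
          ultimately show ?thesis unfolding Db_def by auto
        qed
      qed
    qed
    have "b1 \<le> card (Cb b \<union> Db b)" unfolding b1_def using cover_num_le[OF sub cov] .
    also have "\<dots> \<le> card (Cb b) + card (Db b)" by (rule card_Un_le)
    finally show ?thesis .
  qed
  have F2: "card (Pd d) + b2 \<le> card V2" if dD: "d \<in> D" for d
  proof -
    have PV: "Pd d \<subseteq> V2" unfolding Pd_def by auto
    have sub: "V2 - Pd d \<subseteq> V2" by auto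
    have cov: "\<forall>u v. R2 u v \<longrightarrow> u \<in> V2 - Pd d \<or> v \<in> V2 - Pd d"
    proof (intro allI impI)
      fix u v assume r: "R2 u v"
      have uv: "u \<in> V2" "v \<in> V2" using R2in[OF r] by auto
      show "u \<in> V2 - Pd d \<or> v \<in> V2 - Pd d"
      proof (rule ccontr)
        assume "\<not> ?thesis"
        then have "u \<in> Pd d" "v \<in> Pd d" using uv by auto
        then obtain y where y: "R1 d y" "(y,u) \<notin> C" and "(d,v) \<notin> C" unfolding Pd_def by auto
        then show False using hyp[OF R1sym[OF y(1)] r] by auto
      qed
    qed
    have "b2 \<le> card (V2 - Pd d)" unfolding b2_def using cover_num_le[OF sub cov] .
    also have "\<dots> = card V2 - card (Pd d)" using card_Diff_subset[OF finite_subset[OF PV fin2] PV] .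
    finally show ?thesis using card_mono[OF fin2 PV] by linarith
  qed
  have S1: "card C = (\<Sum>b\<in>V2. card (Cb b))"
  proof -
    have "C = (\<lambda>(b,a). (a,b)) ` (SIGMA b:V2. Cb b)" using CV unfolding Cb_def by auto
    moreover have "inj_on (\<lambda>(b,a). (a,b)) (SIGMA b:V2. Cb b)" by (auto simp: inj_on_def)
    ultimately have "card C = card (SIGMA b:V2. Cb b)" by (simp add: card_image)
    also have "\<dots> = (\<Sum>b\<in>V2. card (Cb b))"
      using fin2 fin1 unfolding Cb_def by (simp add: card_SigmaI)
    finally show ?thesis .
  qed
  have S2: "(\<Sum>b\<in>V2. card (Db b)) = (\<Sum>d\<in>D. card (Pd d))"
  proof -
    have "(\<Sum>b\<in>V2. card (Db b)) = (\<Sum>b\<in>V2. \<Sum>d\<in>D. if b \<in> Pd d then 1 else 0)"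
      unfolding Db_def using card_filter_sum[OF finD] by simp
    also have "\<dots> = (\<Sum>d\<in>D. \<Sum>b\<in>V2. if b \<in> Pd d then 1 else 0)" by (rule sum.swap)
    also have "\<dots> = (\<Sum>d\<in>D. card {b \<in> V2. b \<in> Pd d})" using card_filter_sum[OF fin2] by simp
    also have "\<dots> = (\<Sum>d\<in>D. card (Pd d))" unfolding Pd_def by simp
    finally show ?thesis .
  qed
  have "b1 * card V2 = (\<Sum>b\<in>V2. b1)" by simp
  also have "\<dots> \<le> (\<Sum>b\<in>V2. card (Cb b) + card (Db b))" by (rule sum_mono) (rule F1)
  also have "\<dots> = card C + (\<Sum>d\<in>D. card (Pd d))" using S1 S2 by (simp add: sum.distrib)
  also have "\<dots> \<le> card C + (\<Sum>d\<in>D. card V2 - b2)"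
    using sum_mono[of D "\<lambda>d. card (Pd d)" "\<lambda>d. card V2 - b2"] F2 by fastforce
  also have "\<dots> = card C + b1 * (card V2 - b2)" using D(3) by simp
  finally have main: "b1 * card V2 \<le> card C + b1 * (card V2 - b2)" .
  have "b2 \<le> card V2" unfolding b2_def using cover_num_le[of V2 V2 R2] R2in by blast
  then have "b1 * card V2 = b1 * (card V2 - b2) + b1 * b2"
    by (metis add_diff_inverse_nat diff_le_self le_add_diff_inverse2 le_diff_conv nat_distrib(2) add.commute)
  then show ?thesis using main unfolding b1_def b2_def by linarith
qed




lemma cgraph_of: "simple_graph V E \<Longrightarrow> connected_graph V E \<Longrightarrow> cgraph V E"
  unfolding simple_graph_def by unfold_locales auto

lemma dim_le_cover:
  assumes "cgraph V E"
  shows "strong_metric_dim V E \<le> cover_num V (mmd V E)"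
proof -
  interpret cgraph V E by (rule assms)
  obtain D where D: "D \<subseteq> V" "\<forall>u v. mmd V E u v \<longrightarrow> u \<in> D \<or> v \<in> D" "card D = cover_num V (mmd V E)"
    using cover_num_ex[of "mmd V E" V] by (auto simp: mmd_def)
  have "strong_resolving_set V E D" using hits_resolving[OF D(1)] D(2) by blast
  then have "strong_metric_dim V E \<le> card D" unfolding strong_metric_dim_def
    by (intro Least_le) blast
  then show ?thesis using D(3) by simp
qed

theorem theorem26:
  fixes V1 :: "'a set" and E1 :: "'a \<Rightarrow> 'a \<Rightarrow> bool"
    and V2 :: "'b set" and E2 :: "'b \<Rightarrow> 'b \<Rightarrow> bool"
  assumes "simple_graph V1 E1" and "connected_graph V1 E1"
    and "simple_graph V2 E2" and "connected_graph V2 E2"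
  shows "strong_metric_dim (V1 \<times> V2) (cart_edges E1 E2)
           \<ge> strong_metric_dim V1 E1 * strong_metric_dim V2 E2"
proof -
  have c1: "cgraph V1 E1" and c2: "cgraph V2 E2" using assms cgraph_of by blast+
  interpret two V1 E1 V2 E2 using c1 c2 by (simp add: two_def)
  have "strong_resolving_set (V1 \<times> V2) P (V1 \<times> V2)"
    using PG.hits_resolving[of "V1 \<times> V2"] by (auto simp: mmd_def)
  then have "\<exists>k S. strong_resolving_set (V1 \<times> V2) P S \<and> card S = k" by blast
  then have "\<exists>S. strong_resolving_set (V1 \<times> V2) P S \<and> card S = strong_metric_dim (V1 \<times> V2) P"
    unfolding strong_metric_dim_def by (rule LeastI_ex)
  then obtain S where S: "strong_resolving_set (V1 \<times> V2) P S"
    "card S = strong_metric_dim (V1 \<times> V2) P" by blast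
  have SV: "S \<subseteq> V1 \<times> V2" using S(1) unfolding strong_resolving_set_def by blast
  have "cover_num V1 (mmd V1 E1) * cover_num V2 (mmd V2 E2) \<le> card S"
  proof (rule comb[OF G.finV H.finV _ _ _ SV])
    show "mmd V1 E1 u v \<Longrightarrow> u \<in> V1 \<and> v \<in> V1" for u v by (simp add: mmd_def)
    show "mmd V1 E1 u v \<Longrightarrow> mmd V1 E1 v u" for u v by (rule G.mmd_sym)
    show "mmd V2 E2 u v \<Longrightarrow> u \<in> V2 \<and> v \<in> V2" for u v by (simp add: mmd_def)
    show "(a, b) \<in> S \<or> (a', b') \<in> S" if "mmd V1 E1 a a'" "mmd V2 E2 b b'" for a a' b b'
      using PG.resolving_hits[OF S(1) prod_mmd[OF that]] .
  qed
  moreover have "strong_metric_dim V1 E1 * strong_metric_dim V2 E2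
      \<le> cover_num V1 (mmd V1 E1) * cover_num V2 (mmd V2 E2)"
    using dim_le_cover[OF c1] dim_le_cover[OF c2] by (rule mult_le_mono)
  ultimately show ?thesis using S(2) by simp
qed


end
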